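(* For the generalized coin-tossing process with parameter $p\in(0,1)$, $q=1-p$, and OPs of length $m=3$, the OP probability vector is $\mathbf p=(p^2,\,p^2q,\,p^2q,\,pq^2,\,pq^2,\,q^2)^\top$, and the long-run covariance matrix is $$\Sigma=\begin{pmatrix} p^2(1+2p-3p^2)&p^3q(1-3p)&p^3q(1-3p)&p^2q^2(1-3p)&p^2q^2(1-3p)&-3p^2q^2\\ p^3q(1-3p)&p^2q(1-3p^2q)&p^3q(1-3pq)&-3p^3q^3&p^2q^2(1-3pq)&p^2q^2(1-3q)\\ p^3q(1-3p)&p^3q(1-3pq)&p^2q(1-3p^2q)&p^2q^2(1-3pq)&-3p^3q^3&p^2q^2(1-3q)\\ p^2q^2(1-3p)&-3p^3q^3&p^2q^2(1-3pq)&pq^2(1-3pq^2)&pq^3(1-3pq)&pq^3(3p-2)\\ p^2q^2(1-3p)&p^2q^2(1-3pq)&-3p^3q^3&pq^3(1-3pq)&pq^2(1-3pq^2)&pq^3(3p-2)\\ -3p^2q^2&p^2q^2(1-3q)&p^2q^2(1-3q)&pq^3(3p-2)&pq^3(3p-2)&pq^2(4-3p) \end{pmatrix}.$$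
   Context: Generalized coin-tossing (GCT) process with parameter $p\in(0,1)$, $q=1-p$: a random strict total order on objects $(X_t)_{t\in\mathbb Z}$ defined from mutually independent Bernoulli variables $\xi_{s,t}$, $s<t$, with $\mathbb P(\xi_{s,t}=1)=p$, recursively in $t-s$: if $t-s=1$, $X_s<X_t$ iff $\xi_{s,t}=1$; if $t-s\ge2$ and there is $r\in(s,t)$ with $X_s<X_r<X_t$ then $X_s<X_t$; if there is $r\in(s,t)$ with $X_s>X_r>X_t$ then $X_s>X_t$; otherwise $X_s<X_t$ iff $\xi_{s,t}=1$. $\Pi_t$ is the permutation in $S_3$ giving the ranks of $(X_t,X_{t+1},X_{t+2})$; OPs in lexicographic order are $\pi_1=(1,2,3)$, $\pi_2=(1,3,2)$, $\pi_3=(2,1,3)$, $\pi_4=(2,3,1)$, $\pi_5=(3,1,2)$, $\pi_6=(3,2,1)$. $p_i=\mathbb P(\Pi_0=\pi_i)$, $p_{ij}(k)=\mathbb P(\Pi_0=\pi_i,\Pi_k=\pi_j)$, $\Sigma=(\sigma_{ij})$ with $\sigma_{ij}=p_i(\delta_{ij}-p_j)+\sum_{k=1}^\infty\big(p_{ij}(k)+p_{ji}(k)-2p_ip_j\big)$. *)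

theory Defs
  imports "HOL-Probability.Probability"
begin

definition gct_I :: "(int \<times> int) set" where
  "gct_I = {(s, t). s < t}"

text \<open>Underlying probability space: i.i.d. Bernoulli(p) variables xi_{s,t}, s<t
  (an outcome w assigns the value of xi_{s,t} = 1 to w (s,t)).\<close>
definition gct_M :: "real \<Rightarrow> ((int \<times> int) \<Rightarrow> bool) measure" where
  "gct_M p = PiM gct_I (\<lambda>_. measure_pmf (bernoulli_pmf p))"

text \<open>gct_ltd w d s t: for 0 < t - s <= d, whether X_s < X_t; defined by recursion
  on the distance t - s exactly as in the definition of the GCT process.\<close>
primrec gct_ltd :: "((int \<times> int) \<Rightarrow> bool) \<Rightarrow> nat \<Rightarrow> int \<Rightarrow> int \<Rightarrow> bool" where
  "gct_ltd w 0 s t = False"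
| "gct_ltd w (Suc d) s t =
     (if t - s < int (Suc d) then gct_ltd w d s t
      else if t - s > int (Suc d) then False
      else if d = 0 then w (s, t)
      else if (\<exists>r. s < r \<and> r < t \<and> gct_ltd w d s r \<and> gct_ltd w d r t) then True
      else if (\<exists>r. s < r \<and> r < t \<and> \<not> gct_ltd w d s r \<and> \<not> gct_ltd w d r t) then False
      else w (s, t))"

text \<open>The random strict total order: gct_less w s t  iff  X_s < X_t.\<close>
definition gct_less :: "((int \<times> int) \<Rightarrow> bool) \<Rightarrow> int \<Rightarrow> int \<Rightarrow> bool" where
  "gct_less w s t =
     (if s < t then gct_ltd w (nat (t - s)) s t
      else if t < s then \<not> gct_ltd w (nat (s - t)) t s
      else False)"

definition gct_rank :: "((int \<times> int) \<Rightarrow> bool) \<Rightarrow> int \<Rightarrow> nat \<Rightarrow> nat" where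
  "gct_rank w t j = Suc (card {i \<in> {0..2::nat}. gct_less w (t + int i) (t + int j)})"

definition gct_OP :: "((int \<times> int) \<Rightarrow> bool) \<Rightarrow> int \<Rightarrow> nat list" where
  "gct_OP w t = map (gct_rank w t) [0, 1, 2]"

definition OP_pat :: "nat \<Rightarrow> nat list" where
  "OP_pat i = [[1,2,3], [1,3,2], [2,1,3], [2,3,1], [3,1,2], [3,2,1]] ! (i - 1)"

definition gct_p :: "real \<Rightarrow> nat \<Rightarrow> real" where
  "gct_p p i = measure (gct_M p) {w \<in> space (gct_M p). gct_OP w 0 = OP_pat i}"

definition gct_pij :: "real \<Rightarrow> nat \<Rightarrow> nat \<Rightarrow> nat \<Rightarrow> real" where
  "gct_pij p i j k = measure (gct_M p)
     {w \<in> space (gct_M p). gct_OP w 0 = OP_pat i \<and> gct_OP w (int k) = OP_pat j}"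

definition claimed_pvec :: "real \<Rightarrow> nat \<Rightarrow> real" where
  "claimed_pvec p i = (let q = 1 - p in
     [p^2, p^2*q, p^2*q, p*q^2, p*q^2, q^2] ! (i - 1))"

definition claimed_Sigma :: "real \<Rightarrow> nat \<Rightarrow> nat \<Rightarrow> real" where
  "claimed_Sigma p i j = (let q = 1 - p in
     [[p^2*(1+2*p-3*p^2), p^3*q*(1-3*p), p^3*q*(1-3*p), p^2*q^2*(1-3*p), p^2*q^2*(1-3*p), -3*p^2*q^2],
      [p^3*q*(1-3*p), p^2*q*(1-3*p^2*q), p^3*q*(1-3*p*q), -3*p^3*q^3, p^2*q^2*(1-3*p*q), p^2*q^2*(1-3*q)],
      [p^3*q*(1-3*p), p^3*q*(1-3*p*q), p^2*q*(1-3*p^2*q), p^2*q^2*(1-3*p*q), -3*p^3*q^3, p^2*q^2*(1-3*q)],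
      [p^2*q^2*(1-3*p), -3*p^3*q^3, p^2*q^2*(1-3*p*q), p*q^2*(1-3*p*q^2), p*q^3*(1-3*p*q), p*q^3*(3*p-2)],
      [p^2*q^2*(1-3*p), p^2*q^2*(1-3*p*q), -3*p^3*q^3, p*q^3*(1-3*p*q), p*q^2*(1-3*p*q^2), p*q^3*(3*p-2)],
      [-3*p^2*q^2, p^2*q^2*(1-3*q), p^2*q^2*(1-3*q), p*q^3*(3*p-2), p*q^3*(3*p-2), p*q^2*(4-3*p)]]
     ! (i - 1) ! (j - 1))"

end

theory Submission
  imports Defs
begin

lemma ltd1: "gct_ltd w (Suc 0) s t = (t - s = 1 \<and> w (s,t))"
  by auto

lemma less1: "gct_less w t (t+1) = w (t,t+1)"
  by (simp add: gct_less_def)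

lemma less2: "gct_less w t (t+2) = ((w(t,t+1) \<and> w(t+1,t+2)) \<or> (\<not>(\<not>w(t,t+1) \<and> \<not>w(t+1,t+2)) \<and> w(t,t+2)))"
proof -
  have e: "nat (t + 2 - t) = Suc (Suc 0)" by simp
  have rr: "(t < r \<and> r < t + 2) = (r = t + 1)" for r :: int by arith
  have r: "(\<exists>r. t < r \<and> r < t + 2 \<and> P r) = P (t+1)" for P
  proof -
    have "(\<exists>r. t < r \<and> r < t + 2 \<and> P r) = (\<exists>r. (t < r \<and> r < t + 2) \<and> P r)" by simp
    also have "\<dots> = (\<exists>r. r = t + 1 \<and> P r)" by (simp only: rr)
    finally show ?thesis by simp
  qed
  show ?thesis unfolding gct_less_def e using r[of "\<lambda>r. gct_ltd w (Suc 0) t r \<and> gct_ltd w (Suc 0) r (t + 2)"]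
    r[of "\<lambda>r. \<not>gct_ltd w (Suc 0) t r \<and> \<not>gct_ltd w (Suc 0) r (t + 2)"]
    by (auto simp: ltd1)
qed

lemma less_swap: "s < u \<Longrightarrow> gct_less w u s = (\<not> gct_less w s u)"
  by (simp add: gct_less_def)

lemma less_refl: "gct_less w s s = False"
  by (simp add: gct_less_def)

lemma card3: "card {i \<in> {0..2::nat}. P i} = of_bool (P 0) + of_bool (P 1) + of_bool (P 2)"
proof -
  have a: "{0..2::nat} = {0,1,2}" by auto
  have "card {i \<in> {0..2::nat}. P i} = (\<Sum>i\<in>{i \<in> {0..2::nat}. P i}. 1)" by simp
  also have "\<dots> = (\<Sum>i\<in>{0..2::nat}. if P i then 1 else 0)" by (rule sum.inter_filter) simp
  also have "\<dots> = of_bool (P 0) + of_bool (P 1) + of_bool (P 2)" unfolding a by simp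
  finally show ?thesis .
qed

definition opA :: "nat \<Rightarrow> bool set" where
  "opA i = [{True},{True},{False},{True},{False},{False}] ! (i-1)"
definition opB :: "nat \<Rightarrow> bool set" where
  "opB i = [{True},{False},{True},{False},{True},{False}] ! (i-1)"
definition opC :: "nat \<Rightarrow> bool set" where
  "opC i = [UNIV,{True},{True},{False},{False},UNIV] ! (i-1)"

lemma six: "i \<in> {1..6::nat} \<Longrightarrow> i = 1 \<or> i = 2 \<or> i = 3 \<or> i = 4 \<or> i = 5 \<or> i = 6"
  by auto

definition opl :: "bool \<Rightarrow> bool \<Rightarrow> bool \<Rightarrow> nat list" where
  "opl a b c = [Suc (of_bool (\<not>a) + of_bool (\<not>((a\<and>b) \<or> ((a\<or>b) \<and> c)))),
                Suc (of_bool a + of_bool (\<not>b)),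
                Suc (of_bool ((a\<and>b) \<or> ((a\<or>b) \<and> c)) + of_bool b)]"
lemma opl_iff: "i \<in> {1..6} \<Longrightarrow> (opl a b c = OP_pat i) = (a \<in> opA i \<and> b \<in> opB i \<and> c \<in> opC i)"
  by (drule six, elim disjE; cases a; cases b; cases c; simp add: opl_def OP_pat_def opA_def opB_def opC_def)

lemma OP_opl: "gct_OP w t = opl (w(t,t+1)) (w(t+1,t+2)) (w(t,t+2))"
proof -
  have l3: "gct_less w (t+1) (t+2) = w(t+1,t+2)" using less1[of w "t+1"] by (simp add: add.assoc)
  have s1: "gct_less w (t+1) t = (\<not> w(t,t+1))" by (simp add: less_swap less1)
  have s2: "gct_less w (t+2) (t+1) = (\<not> w(t+1,t+2))" by (simp add: less_swap l3)
  have s3: "gct_less w (t+2) t = (\<not> gct_less w t (t+2))" by (simp add: less_swap)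
  have rk: "gct_rank w t j = Suc (of_bool (gct_less w t (t + int j)) + of_bool (gct_less w (t+1) (t + int j))
      + of_bool (gct_less w (t+2) (t + int j)))" for j
    unfolding gct_rank_def card3 by simp
  have op: "gct_OP w t = [Suc (of_bool (gct_less w (t+1) t) + of_bool (gct_less w (t+2) t)),
      Suc (of_bool (gct_less w t (t+1)) + of_bool (gct_less w (t+2) (t+1))),
      Suc (of_bool (gct_less w t (t+2)) + of_bool (gct_less w (t+1) (t+2)))]"
    unfolding gct_OP_def by (simp add: rk less_refl)
  show ?thesis
    unfolding op s1 s2 s3 less1 l3 less2 opl_def by simp
qed

lemma OP_iff:
  assumes "i \<in> {1..6}"
  shows "(gct_OP w t = OP_pat i) = (w(t,t+1) \<in> opA i \<and> w(t+1,t+2) \<in> opB i \<and> w(t,t+2) \<in> opC i)"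
  unfolding OP_opl by (rule opl_iff[OF assms])

definition mu :: "real \<Rightarrow> bool set \<Rightarrow> real" where
  "mu p S = (if True \<in> S then p else 0) + (if False \<in> S then 1 - p else 0)"

lemma mu_nonneg: "0 \<le> p \<Longrightarrow> p \<le> 1 \<Longrightarrow> 0 \<le> mu p S"
  by (simp add: mu_def)

lemma cyl:
  assumes p: "0 \<le> p" "p \<le> 1" and J: "finite J" "J \<subseteq> gct_I"
  shows "measure (gct_M p) {w\<in>space (gct_M p). \<forall>j\<in>J. w j \<in> X j} = (\<Prod>j\<in>J. mu p (X j))"
proof -
  interpret product_prob_space "\<lambda>_. measure_pmf (bernoulli_pmf p)" gct_I
    by unfold_locales
  have m: "measure (measure_pmf (bernoulli_pmf p)) S = mu p S" for S
  proof -
    have "finite S" by simp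
    then have "measure (measure_pmf (bernoulli_pmf p)) S = sum (pmf (bernoulli_pmf p)) S"
      by (rule measure_measure_pmf_finite)
    also have "\<dots> = mu p S"
    proof -
      have "S = {} \<or> S = {True} \<or> S = {False} \<or> S = {True, False}"
        by (metis (full_types) UNIV_bool Set.set_insert insert_commute subset_UNIV subset_insert subset_singletonD)
      then show ?thesis using p by (auto simp: mu_def)
    qed
    finally show ?thesis .
  qed
  have "emeasure (gct_M p) {w\<in>space (gct_M p). \<forall>j\<in>J. w j \<in> X j} = (\<Prod>j\<in>J. emeasure (measure_pmf (bernoulli_pmf p)) (X j))"
    unfolding gct_M_def by (rule emeasure_PiM_Collect) (use J in auto)
  also have "\<dots> = ennreal (\<Prod>j\<in>J. mu p (X j))"
    by (simp add: measure_pmf.emeasure_eq_measure m prod_ennreal mu_nonneg p)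
  finally show ?thesis
    by (simp add: measure_def prod_nonneg mu_nonneg p)
qed


lemma sig_1_1: "mu p (opA 1) * mu p (opB 1 \<inter> opA 1) * mu p (opC 1) * mu p (opB 1) * mu p (opC 1)
   + mu p (opA 1) * mu p (opB 1 \<inter> opA 1) * mu p (opC 1) * mu p (opB 1) * mu p (opC 1)
   - 2 * (mu p (opA 1) * mu p (opB 1) * mu p (opC 1)) * (mu p (opA 1) * mu p (opB 1) * mu p (opC 1))
   = claimed_Sigma p 1 1 - (mu p (opA 1) * mu p (opB 1) * mu p (opC 1)) * ((if (1::nat) = 1 then 1 else 0) - (mu p (opA 1) * mu p (opB 1) * mu p (opC 1)))"
  by (simp add: mu_def opA_def opB_def opC_def claimed_Sigma_def Let_def; simp add: algebra_simps power2_eq_square power3_eq_cube)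

lemma sig_1_2: "mu p (opA 1) * mu p (opB 1 \<inter> opA 2) * mu p (opC 1) * mu p (opB 2) * mu p (opC 2)
   + mu p (opA 2) * mu p (opB 2 \<inter> opA 1) * mu p (opC 2) * mu p (opB 1) * mu p (opC 1)
   - 2 * (mu p (opA 1) * mu p (opB 1) * mu p (opC 1)) * (mu p (opA 2) * mu p (opB 2) * mu p (opC 2))
   = claimed_Sigma p 1 2 - (mu p (opA 1) * mu p (opB 1) * mu p (opC 1)) * ((if (1::nat) = 2 then 1 else 0) - (mu p (opA 2) * mu p (opB 2) * mu p (opC 2)))"
  by (simp add: mu_def opA_def opB_def opC_def claimed_Sigma_def Let_def; simp add: algebra_simps power2_eq_square power3_eq_cube)

lemma sig_1_3: "mu p (opA 1) * mu p (opB 1 \<inter> opA 3) * mu p (opC 1) * mu p (opB 3) * mu p (opC 3)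
   + mu p (opA 3) * mu p (opB 3 \<inter> opA 1) * mu p (opC 3) * mu p (opB 1) * mu p (opC 1)
   - 2 * (mu p (opA 1) * mu p (opB 1) * mu p (opC 1)) * (mu p (opA 3) * mu p (opB 3) * mu p (opC 3))
   = claimed_Sigma p 1 3 - (mu p (opA 1) * mu p (opB 1) * mu p (opC 1)) * ((if (1::nat) = 3 then 1 else 0) - (mu p (opA 3) * mu p (opB 3) * mu p (opC 3)))"
  by (simp add: mu_def opA_def opB_def opC_def claimed_Sigma_def Let_def; simp add: algebra_simps power2_eq_square power3_eq_cube)

lemma sig_1_4: "mu p (opA 1) * mu p (opB 1 \<inter> opA 4) * mu p (opC 1) * mu p (opB 4) * mu p (opC 4)
   + mu p (opA 4) * mu p (opB 4 \<inter> opA 1) * mu p (opC 4) * mu p (opB 1) * mu p (opC 1)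
   - 2 * (mu p (opA 1) * mu p (opB 1) * mu p (opC 1)) * (mu p (opA 4) * mu p (opB 4) * mu p (opC 4))
   = claimed_Sigma p 1 4 - (mu p (opA 1) * mu p (opB 1) * mu p (opC 1)) * ((if (1::nat) = 4 then 1 else 0) - (mu p (opA 4) * mu p (opB 4) * mu p (opC 4)))"
  by (simp add: mu_def opA_def opB_def opC_def claimed_Sigma_def Let_def; simp add: algebra_simps power2_eq_square power3_eq_cube)

lemma sig_1_5: "mu p (opA 1) * mu p (opB 1 \<inter> opA 5) * mu p (opC 1) * mu p (opB 5) * mu p (opC 5)
   + mu p (opA 5) * mu p (opB 5 \<inter> opA 1) * mu p (opC 5) * mu p (opB 1) * mu p (opC 1)
   - 2 * (mu p (opA 1) * mu p (opB 1) * mu p (opC 1)) * (mu p (opA 5) * mu p (opB 5) * mu p (opC 5))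
   = claimed_Sigma p 1 5 - (mu p (opA 1) * mu p (opB 1) * mu p (opC 1)) * ((if (1::nat) = 5 then 1 else 0) - (mu p (opA 5) * mu p (opB 5) * mu p (opC 5)))"
  by (simp add: mu_def opA_def opB_def opC_def claimed_Sigma_def Let_def; simp add: algebra_simps power2_eq_square power3_eq_cube)

lemma sig_1_6: "mu p (opA 1) * mu p (opB 1 \<inter> opA 6) * mu p (opC 1) * mu p (opB 6) * mu p (opC 6)
   + mu p (opA 6) * mu p (opB 6 \<inter> opA 1) * mu p (opC 6) * mu p (opB 1) * mu p (opC 1)
   - 2 * (mu p (opA 1) * mu p (opB 1) * mu p (opC 1)) * (mu p (opA 6) * mu p (opB 6) * mu p (opC 6))
   = claimed_Sigma p 1 6 - (mu p (opA 1) * mu p (opB 1) * mu p (opC 1)) * ((if (1::nat) = 6 then 1 else 0) - (mu p (opA 6) * mu p (opB 6) * mu p (opC 6)))"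
  by (simp add: mu_def opA_def opB_def opC_def claimed_Sigma_def Let_def; simp add: algebra_simps power2_eq_square power3_eq_cube)

lemma sig_2_1: "mu p (opA 2) * mu p (opB 2 \<inter> opA 1) * mu p (opC 2) * mu p (opB 1) * mu p (opC 1)
   + mu p (opA 1) * mu p (opB 1 \<inter> opA 2) * mu p (opC 1) * mu p (opB 2) * mu p (opC 2)
   - 2 * (mu p (opA 2) * mu p (opB 2) * mu p (opC 2)) * (mu p (opA 1) * mu p (opB 1) * mu p (opC 1))
   = claimed_Sigma p 2 1 - (mu p (opA 2) * mu p (opB 2) * mu p (opC 2)) * ((if (2::nat) = 1 then 1 else 0) - (mu p (opA 1) * mu p (opB 1) * mu p (opC 1)))"
  by (simp add: mu_def opA_def opB_def opC_def claimed_Sigma_def Let_def; simp add: algebra_simps power2_eq_square power3_eq_cube)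

lemma sig_2_2: "mu p (opA 2) * mu p (opB 2 \<inter> opA 2) * mu p (opC 2) * mu p (opB 2) * mu p (opC 2)
   + mu p (opA 2) * mu p (opB 2 \<inter> opA 2) * mu p (opC 2) * mu p (opB 2) * mu p (opC 2)
   - 2 * (mu p (opA 2) * mu p (opB 2) * mu p (opC 2)) * (mu p (opA 2) * mu p (opB 2) * mu p (opC 2))
   = claimed_Sigma p 2 2 - (mu p (opA 2) * mu p (opB 2) * mu p (opC 2)) * ((if (2::nat) = 2 then 1 else 0) - (mu p (opA 2) * mu p (opB 2) * mu p (opC 2)))"
  by (simp add: mu_def opA_def opB_def opC_def claimed_Sigma_def Let_def; simp add: algebra_simps power2_eq_square power3_eq_cube)

lemma sig_2_3: "mu p (opA 2) * mu p (opB 2 \<inter> opA 3) * mu p (opC 2) * mu p (opB 3) * mu p (opC 3)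
   + mu p (opA 3) * mu p (opB 3 \<inter> opA 2) * mu p (opC 3) * mu p (opB 2) * mu p (opC 2)
   - 2 * (mu p (opA 2) * mu p (opB 2) * mu p (opC 2)) * (mu p (opA 3) * mu p (opB 3) * mu p (opC 3))
   = claimed_Sigma p 2 3 - (mu p (opA 2) * mu p (opB 2) * mu p (opC 2)) * ((if (2::nat) = 3 then 1 else 0) - (mu p (opA 3) * mu p (opB 3) * mu p (opC 3)))"
  by (simp add: mu_def opA_def opB_def opC_def claimed_Sigma_def Let_def; simp add: algebra_simps power2_eq_square power3_eq_cube)

lemma sig_2_4: "mu p (opA 2) * mu p (opB 2 \<inter> opA 4) * mu p (opC 2) * mu p (opB 4) * mu p (opC 4)
   + mu p (opA 4) * mu p (opB 4 \<inter> opA 2) * mu p (opC 4) * mu p (opB 2) * mu p (opC 2)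
   - 2 * (mu p (opA 2) * mu p (opB 2) * mu p (opC 2)) * (mu p (opA 4) * mu p (opB 4) * mu p (opC 4))
   = claimed_Sigma p 2 4 - (mu p (opA 2) * mu p (opB 2) * mu p (opC 2)) * ((if (2::nat) = 4 then 1 else 0) - (mu p (opA 4) * mu p (opB 4) * mu p (opC 4)))"
  by (simp add: mu_def opA_def opB_def opC_def claimed_Sigma_def Let_def; simp add: algebra_simps power2_eq_square power3_eq_cube)

lemma sig_2_5: "mu p (opA 2) * mu p (opB 2 \<inter> opA 5) * mu p (opC 2) * mu p (opB 5) * mu p (opC 5)
   + mu p (opA 5) * mu p (opB 5 \<inter> opA 2) * mu p (opC 5) * mu p (opB 2) * mu p (opC 2)
   - 2 * (mu p (opA 2) * mu p (opB 2) * mu p (opC 2)) * (mu p (opA 5) * mu p (opB 5) * mu p (opC 5))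
   = claimed_Sigma p 2 5 - (mu p (opA 2) * mu p (opB 2) * mu p (opC 2)) * ((if (2::nat) = 5 then 1 else 0) - (mu p (opA 5) * mu p (opB 5) * mu p (opC 5)))"
  by (simp add: mu_def opA_def opB_def opC_def claimed_Sigma_def Let_def; simp add: algebra_simps power2_eq_square power3_eq_cube)

lemma sig_2_6: "mu p (opA 2) * mu p (opB 2 \<inter> opA 6) * mu p (opC 2) * mu p (opB 6) * mu p (opC 6)
   + mu p (opA 6) * mu p (opB 6 \<inter> opA 2) * mu p (opC 6) * mu p (opB 2) * mu p (opC 2)
   - 2 * (mu p (opA 2) * mu p (opB 2) * mu p (opC 2)) * (mu p (opA 6) * mu p (opB 6) * mu p (opC 6))
   = claimed_Sigma p 2 6 - (mu p (opA 2) * mu p (opB 2) * mu p (opC 2)) * ((if (2::nat) = 6 then 1 else 0) - (mu p (opA 6) * mu p (opB 6) * mu p (opC 6)))"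
  by (simp add: mu_def opA_def opB_def opC_def claimed_Sigma_def Let_def; simp add: algebra_simps power2_eq_square power3_eq_cube)

lemma sig_3_1: "mu p (opA 3) * mu p (opB 3 \<inter> opA 1) * mu p (opC 3) * mu p (opB 1) * mu p (opC 1)
   + mu p (opA 1) * mu p (opB 1 \<inter> opA 3) * mu p (opC 1) * mu p (opB 3) * mu p (opC 3)
   - 2 * (mu p (opA 3) * mu p (opB 3) * mu p (opC 3)) * (mu p (opA 1) * mu p (opB 1) * mu p (opC 1))
   = claimed_Sigma p 3 1 - (mu p (opA 3) * mu p (opB 3) * mu p (opC 3)) * ((if (3::nat) = 1 then 1 else 0) - (mu p (opA 1) * mu p (opB 1) * mu p (opC 1)))"
  by (simp add: mu_def opA_def opB_def opC_def claimed_Sigma_def Let_def; simp add: algebra_simps power2_eq_square power3_eq_cube)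

lemma sig_3_2: "mu p (opA 3) * mu p (opB 3 \<inter> opA 2) * mu p (opC 3) * mu p (opB 2) * mu p (opC 2)
   + mu p (opA 2) * mu p (opB 2 \<inter> opA 3) * mu p (opC 2) * mu p (opB 3) * mu p (opC 3)
   - 2 * (mu p (opA 3) * mu p (opB 3) * mu p (opC 3)) * (mu p (opA 2) * mu p (opB 2) * mu p (opC 2))
   = claimed_Sigma p 3 2 - (mu p (opA 3) * mu p (opB 3) * mu p (opC 3)) * ((if (3::nat) = 2 then 1 else 0) - (mu p (opA 2) * mu p (opB 2) * mu p (opC 2)))"
  by (simp add: mu_def opA_def opB_def opC_def claimed_Sigma_def Let_def; simp add: algebra_simps power2_eq_square power3_eq_cube)

lemma sig_3_3: "mu p (opA 3) * mu p (opB 3 \<inter> opA 3) * mu p (opC 3) * mu p (opB 3) * mu p (opC 3)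
   + mu p (opA 3) * mu p (opB 3 \<inter> opA 3) * mu p (opC 3) * mu p (opB 3) * mu p (opC 3)
   - 2 * (mu p (opA 3) * mu p (opB 3) * mu p (opC 3)) * (mu p (opA 3) * mu p (opB 3) * mu p (opC 3))
   = claimed_Sigma p 3 3 - (mu p (opA 3) * mu p (opB 3) * mu p (opC 3)) * ((if (3::nat) = 3 then 1 else 0) - (mu p (opA 3) * mu p (opB 3) * mu p (opC 3)))"
  by (simp add: mu_def opA_def opB_def opC_def claimed_Sigma_def Let_def; simp add: algebra_simps power2_eq_square power3_eq_cube)

lemma sig_3_4: "mu p (opA 3) * mu p (opB 3 \<inter> opA 4) * mu p (opC 3) * mu p (opB 4) * mu p (opC 4)
   + mu p (opA 4) * mu p (opB 4 \<inter> opA 3) * mu p (opC 4) * mu p (opB 3) * mu p (opC 3)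
   - 2 * (mu p (opA 3) * mu p (opB 3) * mu p (opC 3)) * (mu p (opA 4) * mu p (opB 4) * mu p (opC 4))
   = claimed_Sigma p 3 4 - (mu p (opA 3) * mu p (opB 3) * mu p (opC 3)) * ((if (3::nat) = 4 then 1 else 0) - (mu p (opA 4) * mu p (opB 4) * mu p (opC 4)))"
  by (simp add: mu_def opA_def opB_def opC_def claimed_Sigma_def Let_def; simp add: algebra_simps power2_eq_square power3_eq_cube)

lemma sig_3_5: "mu p (opA 3) * mu p (opB 3 \<inter> opA 5) * mu p (opC 3) * mu p (opB 5) * mu p (opC 5)
   + mu p (opA 5) * mu p (opB 5 \<inter> opA 3) * mu p (opC 5) * mu p (opB 3) * mu p (opC 3)
   - 2 * (mu p (opA 3) * mu p (opB 3) * mu p (opC 3)) * (mu p (opA 5) * mu p (opB 5) * mu p (opC 5))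
   = claimed_Sigma p 3 5 - (mu p (opA 3) * mu p (opB 3) * mu p (opC 3)) * ((if (3::nat) = 5 then 1 else 0) - (mu p (opA 5) * mu p (opB 5) * mu p (opC 5)))"
  by (simp add: mu_def opA_def opB_def opC_def claimed_Sigma_def Let_def; simp add: algebra_simps power2_eq_square power3_eq_cube)

lemma sig_3_6: "mu p (opA 3) * mu p (opB 3 \<inter> opA 6) * mu p (opC 3) * mu p (opB 6) * mu p (opC 6)
   + mu p (opA 6) * mu p (opB 6 \<inter> opA 3) * mu p (opC 6) * mu p (opB 3) * mu p (opC 3)
   - 2 * (mu p (opA 3) * mu p (opB 3) * mu p (opC 3)) * (mu p (opA 6) * mu p (opB 6) * mu p (opC 6))
   = claimed_Sigma p 3 6 - (mu p (opA 3) * mu p (opB 3) * mu p (opC 3)) * ((if (3::nat) = 6 then 1 else 0) - (mu p (opA 6) * mu p (opB 6) * mu p (opC 6)))"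
  by (simp add: mu_def opA_def opB_def opC_def claimed_Sigma_def Let_def; simp add: algebra_simps power2_eq_square power3_eq_cube)

lemma sig_4_1: "mu p (opA 4) * mu p (opB 4 \<inter> opA 1) * mu p (opC 4) * mu p (opB 1) * mu p (opC 1)
   + mu p (opA 1) * mu p (opB 1 \<inter> opA 4) * mu p (opC 1) * mu p (opB 4) * mu p (opC 4)
   - 2 * (mu p (opA 4) * mu p (opB 4) * mu p (opC 4)) * (mu p (opA 1) * mu p (opB 1) * mu p (opC 1))
   = claimed_Sigma p 4 1 - (mu p (opA 4) * mu p (opB 4) * mu p (opC 4)) * ((if (4::nat) = 1 then 1 else 0) - (mu p (opA 1) * mu p (opB 1) * mu p (opC 1)))"
  by (simp add: mu_def opA_def opB_def opC_def claimed_Sigma_def Let_def; simp add: algebra_simps power2_eq_square power3_eq_cube)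

lemma sig_4_2: "mu p (opA 4) * mu p (opB 4 \<inter> opA 2) * mu p (opC 4) * mu p (opB 2) * mu p (opC 2)
   + mu p (opA 2) * mu p (opB 2 \<inter> opA 4) * mu p (opC 2) * mu p (opB 4) * mu p (opC 4)
   - 2 * (mu p (opA 4) * mu p (opB 4) * mu p (opC 4)) * (mu p (opA 2) * mu p (opB 2) * mu p (opC 2))
   = claimed_Sigma p 4 2 - (mu p (opA 4) * mu p (opB 4) * mu p (opC 4)) * ((if (4::nat) = 2 then 1 else 0) - (mu p (opA 2) * mu p (opB 2) * mu p (opC 2)))"
  by (simp add: mu_def opA_def opB_def opC_def claimed_Sigma_def Let_def; simp add: algebra_simps power2_eq_square power3_eq_cube)

lemma sig_4_3: "mu p (opA 4) * mu p (opB 4 \<inter> opA 3) * mu p (opC 4) * mu p (opB 3) * mu p (opC 3)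
   + mu p (opA 3) * mu p (opB 3 \<inter> opA 4) * mu p (opC 3) * mu p (opB 4) * mu p (opC 4)
   - 2 * (mu p (opA 4) * mu p (opB 4) * mu p (opC 4)) * (mu p (opA 3) * mu p (opB 3) * mu p (opC 3))
   = claimed_Sigma p 4 3 - (mu p (opA 4) * mu p (opB 4) * mu p (opC 4)) * ((if (4::nat) = 3 then 1 else 0) - (mu p (opA 3) * mu p (opB 3) * mu p (opC 3)))"
  by (simp add: mu_def opA_def opB_def opC_def claimed_Sigma_def Let_def; simp add: algebra_simps power2_eq_square power3_eq_cube)

lemma sig_4_4: "mu p (opA 4) * mu p (opB 4 \<inter> opA 4) * mu p (opC 4) * mu p (opB 4) * mu p (opC 4)
   + mu p (opA 4) * mu p (opB 4 \<inter> opA 4) * mu p (opC 4) * mu p (opB 4) * mu p (opC 4)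
   - 2 * (mu p (opA 4) * mu p (opB 4) * mu p (opC 4)) * (mu p (opA 4) * mu p (opB 4) * mu p (opC 4))
   = claimed_Sigma p 4 4 - (mu p (opA 4) * mu p (opB 4) * mu p (opC 4)) * ((if (4::nat) = 4 then 1 else 0) - (mu p (opA 4) * mu p (opB 4) * mu p (opC 4)))"
  by (simp add: mu_def opA_def opB_def opC_def claimed_Sigma_def Let_def; simp add: algebra_simps power2_eq_square power3_eq_cube)

lemma sig_4_5: "mu p (opA 4) * mu p (opB 4 \<inter> opA 5) * mu p (opC 4) * mu p (opB 5) * mu p (opC 5)
   + mu p (opA 5) * mu p (opB 5 \<inter> opA 4) * mu p (opC 5) * mu p (opB 4) * mu p (opC 4)
   - 2 * (mu p (opA 4) * mu p (opB 4) * mu p (opC 4)) * (mu p (opA 5) * mu p (opB 5) * mu p (opC 5))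
   = claimed_Sigma p 4 5 - (mu p (opA 4) * mu p (opB 4) * mu p (opC 4)) * ((if (4::nat) = 5 then 1 else 0) - (mu p (opA 5) * mu p (opB 5) * mu p (opC 5)))"
  by (simp add: mu_def opA_def opB_def opC_def claimed_Sigma_def Let_def; simp add: algebra_simps power2_eq_square power3_eq_cube)

lemma sig_4_6: "mu p (opA 4) * mu p (opB 4 \<inter> opA 6) * mu p (opC 4) * mu p (opB 6) * mu p (opC 6)
   + mu p (opA 6) * mu p (opB 6 \<inter> opA 4) * mu p (opC 6) * mu p (opB 4) * mu p (opC 4)
   - 2 * (mu p (opA 4) * mu p (opB 4) * mu p (opC 4)) * (mu p (opA 6) * mu p (opB 6) * mu p (opC 6))
   = claimed_Sigma p 4 6 - (mu p (opA 4) * mu p (opB 4) * mu p (opC 4)) * ((if (4::nat) = 6 then 1 else 0) - (mu p (opA 6) * mu p (opB 6) * mu p (opC 6)))"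
  by (simp add: mu_def opA_def opB_def opC_def claimed_Sigma_def Let_def; simp add: algebra_simps power2_eq_square power3_eq_cube)

lemma sig_5_1: "mu p (opA 5) * mu p (opB 5 \<inter> opA 1) * mu p (opC 5) * mu p (opB 1) * mu p (opC 1)
   + mu p (opA 1) * mu p (opB 1 \<inter> opA 5) * mu p (opC 1) * mu p (opB 5) * mu p (opC 5)
   - 2 * (mu p (opA 5) * mu p (opB 5) * mu p (opC 5)) * (mu p (opA 1) * mu p (opB 1) * mu p (opC 1))
   = claimed_Sigma p 5 1 - (mu p (opA 5) * mu p (opB 5) * mu p (opC 5)) * ((if (5::nat) = 1 then 1 else 0) - (mu p (opA 1) * mu p (opB 1) * mu p (opC 1)))"
  by (simp add: mu_def opA_def opB_def opC_def claimed_Sigma_def Let_def; simp add: algebra_simps power2_eq_square power3_eq_cube)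

lemma sig_5_2: "mu p (opA 5) * mu p (opB 5 \<inter> opA 2) * mu p (opC 5) * mu p (opB 2) * mu p (opC 2)
   + mu p (opA 2) * mu p (opB 2 \<inter> opA 5) * mu p (opC 2) * mu p (opB 5) * mu p (opC 5)
   - 2 * (mu p (opA 5) * mu p (opB 5) * mu p (opC 5)) * (mu p (opA 2) * mu p (opB 2) * mu p (opC 2))
   = claimed_Sigma p 5 2 - (mu p (opA 5) * mu p (opB 5) * mu p (opC 5)) * ((if (5::nat) = 2 then 1 else 0) - (mu p (opA 2) * mu p (opB 2) * mu p (opC 2)))"
  by (simp add: mu_def opA_def opB_def opC_def claimed_Sigma_def Let_def; simp add: algebra_simps power2_eq_square power3_eq_cube)

lemma sig_5_3: "mu p (opA 5) * mu p (opB 5 \<inter> opA 3) * mu p (opC 5) * mu p (opB 3) * mu p (opC 3)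
   + mu p (opA 3) * mu p (opB 3 \<inter> opA 5) * mu p (opC 3) * mu p (opB 5) * mu p (opC 5)
   - 2 * (mu p (opA 5) * mu p (opB 5) * mu p (opC 5)) * (mu p (opA 3) * mu p (opB 3) * mu p (opC 3))
   = claimed_Sigma p 5 3 - (mu p (opA 5) * mu p (opB 5) * mu p (opC 5)) * ((if (5::nat) = 3 then 1 else 0) - (mu p (opA 3) * mu p (opB 3) * mu p (opC 3)))"
  by (simp add: mu_def opA_def opB_def opC_def claimed_Sigma_def Let_def; simp add: algebra_simps power2_eq_square power3_eq_cube)

lemma sig_5_4: "mu p (opA 5) * mu p (opB 5 \<inter> opA 4) * mu p (opC 5) * mu p (opB 4) * mu p (opC 4)
   + mu p (opA 4) * mu p (opB 4 \<inter> opA 5) * mu p (opC 4) * mu p (opB 5) * mu p (opC 5)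
   - 2 * (mu p (opA 5) * mu p (opB 5) * mu p (opC 5)) * (mu p (opA 4) * mu p (opB 4) * mu p (opC 4))
   = claimed_Sigma p 5 4 - (mu p (opA 5) * mu p (opB 5) * mu p (opC 5)) * ((if (5::nat) = 4 then 1 else 0) - (mu p (opA 4) * mu p (opB 4) * mu p (opC 4)))"
  by (simp add: mu_def opA_def opB_def opC_def claimed_Sigma_def Let_def; simp add: algebra_simps power2_eq_square power3_eq_cube)

lemma sig_5_5: "mu p (opA 5) * mu p (opB 5 \<inter> opA 5) * mu p (opC 5) * mu p (opB 5) * mu p (opC 5)
   + mu p (opA 5) * mu p (opB 5 \<inter> opA 5) * mu p (opC 5) * mu p (opB 5) * mu p (opC 5)
   - 2 * (mu p (opA 5) * mu p (opB 5) * mu p (opC 5)) * (mu p (opA 5) * mu p (opB 5) * mu p (opC 5))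
   = claimed_Sigma p 5 5 - (mu p (opA 5) * mu p (opB 5) * mu p (opC 5)) * ((if (5::nat) = 5 then 1 else 0) - (mu p (opA 5) * mu p (opB 5) * mu p (opC 5)))"
  by (simp add: mu_def opA_def opB_def opC_def claimed_Sigma_def Let_def; simp add: algebra_simps power2_eq_square power3_eq_cube)

lemma sig_5_6: "mu p (opA 5) * mu p (opB 5 \<inter> opA 6) * mu p (opC 5) * mu p (opB 6) * mu p (opC 6)
   + mu p (opA 6) * mu p (opB 6 \<inter> opA 5) * mu p (opC 6) * mu p (opB 5) * mu p (opC 5)
   - 2 * (mu p (opA 5) * mu p (opB 5) * mu p (opC 5)) * (mu p (opA 6) * mu p (opB 6) * mu p (opC 6))
   = claimed_Sigma p 5 6 - (mu p (opA 5) * mu p (opB 5) * mu p (opC 5)) * ((if (5::nat) = 6 then 1 else 0) - (mu p (opA 6) * mu p (opB 6) * mu p (opC 6)))"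
  by (simp add: mu_def opA_def opB_def opC_def claimed_Sigma_def Let_def; simp add: algebra_simps power2_eq_square power3_eq_cube)

lemma sig_6_1: "mu p (opA 6) * mu p (opB 6 \<inter> opA 1) * mu p (opC 6) * mu p (opB 1) * mu p (opC 1)
   + mu p (opA 1) * mu p (opB 1 \<inter> opA 6) * mu p (opC 1) * mu p (opB 6) * mu p (opC 6)
   - 2 * (mu p (opA 6) * mu p (opB 6) * mu p (opC 6)) * (mu p (opA 1) * mu p (opB 1) * mu p (opC 1))
   = claimed_Sigma p 6 1 - (mu p (opA 6) * mu p (opB 6) * mu p (opC 6)) * ((if (6::nat) = 1 then 1 else 0) - (mu p (opA 1) * mu p (opB 1) * mu p (opC 1)))"
  by (simp add: mu_def opA_def opB_def opC_def claimed_Sigma_def Let_def; simp add: algebra_simps power2_eq_square power3_eq_cube)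

lemma sig_6_2: "mu p (opA 6) * mu p (opB 6 \<inter> opA 2) * mu p (opC 6) * mu p (opB 2) * mu p (opC 2)
   + mu p (opA 2) * mu p (opB 2 \<inter> opA 6) * mu p (opC 2) * mu p (opB 6) * mu p (opC 6)
   - 2 * (mu p (opA 6) * mu p (opB 6) * mu p (opC 6)) * (mu p (opA 2) * mu p (opB 2) * mu p (opC 2))
   = claimed_Sigma p 6 2 - (mu p (opA 6) * mu p (opB 6) * mu p (opC 6)) * ((if (6::nat) = 2 then 1 else 0) - (mu p (opA 2) * mu p (opB 2) * mu p (opC 2)))"
  by (simp add: mu_def opA_def opB_def opC_def claimed_Sigma_def Let_def; simp add: algebra_simps power2_eq_square power3_eq_cube)

lemma sig_6_3: "mu p (opA 6) * mu p (opB 6 \<inter> opA 3) * mu p (opC 6) * mu p (opB 3) * mu p (opC 3)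
   + mu p (opA 3) * mu p (opB 3 \<inter> opA 6) * mu p (opC 3) * mu p (opB 6) * mu p (opC 6)
   - 2 * (mu p (opA 6) * mu p (opB 6) * mu p (opC 6)) * (mu p (opA 3) * mu p (opB 3) * mu p (opC 3))
   = claimed_Sigma p 6 3 - (mu p (opA 6) * mu p (opB 6) * mu p (opC 6)) * ((if (6::nat) = 3 then 1 else 0) - (mu p (opA 3) * mu p (opB 3) * mu p (opC 3)))"
  by (simp add: mu_def opA_def opB_def opC_def claimed_Sigma_def Let_def; simp add: algebra_simps power2_eq_square power3_eq_cube)

lemma sig_6_4: "mu p (opA 6) * mu p (opB 6 \<inter> opA 4) * mu p (opC 6) * mu p (opB 4) * mu p (opC 4)
   + mu p (opA 4) * mu p (opB 4 \<inter> opA 6) * mu p (opC 4) * mu p (opB 6) * mu p (opC 6)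
   - 2 * (mu p (opA 6) * mu p (opB 6) * mu p (opC 6)) * (mu p (opA 4) * mu p (opB 4) * mu p (opC 4))
   = claimed_Sigma p 6 4 - (mu p (opA 6) * mu p (opB 6) * mu p (opC 6)) * ((if (6::nat) = 4 then 1 else 0) - (mu p (opA 4) * mu p (opB 4) * mu p (opC 4)))"
  by (simp add: mu_def opA_def opB_def opC_def claimed_Sigma_def Let_def; simp add: algebra_simps power2_eq_square power3_eq_cube)

lemma sig_6_5: "mu p (opA 6) * mu p (opB 6 \<inter> opA 5) * mu p (opC 6) * mu p (opB 5) * mu p (opC 5)
   + mu p (opA 5) * mu p (opB 5 \<inter> opA 6) * mu p (opC 5) * mu p (opB 6) * mu p (opC 6)
   - 2 * (mu p (opA 6) * mu p (opB 6) * mu p (opC 6)) * (mu p (opA 5) * mu p (opB 5) * mu p (opC 5))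
   = claimed_Sigma p 6 5 - (mu p (opA 6) * mu p (opB 6) * mu p (opC 6)) * ((if (6::nat) = 5 then 1 else 0) - (mu p (opA 5) * mu p (opB 5) * mu p (opC 5)))"
  by (simp add: mu_def opA_def opB_def opC_def claimed_Sigma_def Let_def; simp add: algebra_simps power2_eq_square power3_eq_cube)

lemma sig_6_6: "mu p (opA 6) * mu p (opB 6 \<inter> opA 6) * mu p (opC 6) * mu p (opB 6) * mu p (opC 6)
   + mu p (opA 6) * mu p (opB 6 \<inter> opA 6) * mu p (opC 6) * mu p (opB 6) * mu p (opC 6)
   - 2 * (mu p (opA 6) * mu p (opB 6) * mu p (opC 6)) * (mu p (opA 6) * mu p (opB 6) * mu p (opC 6))
   = claimed_Sigma p 6 6 - (mu p (opA 6) * mu p (opB 6) * mu p (opC 6)) * ((if (6::nat) = 6 then 1 else 0) - (mu p (opA 6) * mu p (opB 6) * mu p (opC 6)))"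
  by (simp add: mu_def opA_def opB_def opC_def claimed_Sigma_def Let_def; simp add: algebra_simps power2_eq_square power3_eq_cube)

lemma sig:
  assumes i: "i \<in> {1..6}" and j: "j \<in> {1..6}"
  shows "mu p (opA i) * mu p (opB i \<inter> opA j) * mu p (opC i) * mu p (opB j) * mu p (opC j)
   + mu p (opA j) * mu p (opB j \<inter> opA i) * mu p (opC j) * mu p (opB i) * mu p (opC i)
   - 2 * (mu p (opA i) * mu p (opB i) * mu p (opC i)) * (mu p (opA j) * mu p (opB j) * mu p (opC j))
   = claimed_Sigma p i j - (mu p (opA i) * mu p (opB i) * mu p (opC i)) * ((if i = j then 1 else 0) - (mu p (opA j) * mu p (opB j) * mu p (opC j)))"
  using six[OF i] six[OF j]
  by (elim disjE) (simp_all only: sig_1_1 sig_1_2 sig_1_3 sig_1_4 sig_1_5 sig_1_6 sig_2_1 sig_2_2 sig_2_3 sig_2_4 sig_2_5 sig_2_6 sig_3_1 sig_3_2 sig_3_3 sig_3_4 sig_3_5 sig_3_6 sig_4_1 sig_4_2 sig_4_3 sig_4_4 sig_4_5 sig_4_6 sig_5_1 sig_5_2 sig_5_3 sig_5_4 sig_5_5 sig_5_6 sig_6_1 sig_6_2 sig_6_3 sig_6_4 sig_6_5 sig_6_6)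

lemma p_formula:
  assumes p: "0 \<le> p" "p \<le> 1" and i: "i \<in> {1..6}"
  shows "gct_p p i = mu p (opA i) * mu p (opB i) * mu p (opC i)"
proof -
  define X where "X = (\<lambda>j::int\<times>int. if j = (0,1) then opA i else if j = (1,2) then opB i else opC i)"
  have "{w\<in>space (gct_M p). gct_OP w 0 = OP_pat i} = {w\<in>space (gct_M p). \<forall>j\<in>{(0,1),(1,2),(0,2)}. w j \<in> X j}"
    using OP_iff[OF i, of _ 0] by (auto simp: X_def)
  then have "gct_p p i = (\<Prod>j\<in>{(0,1),(1,2),(0,2)}. mu p (X j))"
    unfolding gct_p_def by (simp only:) (rule cyl[OF p], auto simp: gct_I_def)
  then show ?thesis by (simp add: X_def)
qed

lemma pij1:
  assumes p: "0 \<le> p" "p \<le> 1" and i: "i \<in> {1..6}" and j: "j \<in> {1..6}"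
  shows "gct_pij p i j (Suc 0) = mu p (opA i) * mu p (opB i \<inter> opA j) * mu p (opC i) * mu p (opB j) * mu p (opC j)"
proof -
  define X where "X = (\<lambda>u::int\<times>int. if u = (0,1) then opA i else if u = (1,2) then opB i \<inter> opA j
     else if u = (0,2) then opC i else if u = (2,3) then opB j else opC j)"
  have "{w\<in>space (gct_M p). gct_OP w 0 = OP_pat i \<and> gct_OP w (int (Suc 0)) = OP_pat j} =
      {w\<in>space (gct_M p). \<forall>u\<in>{(0,1),(1,2),(0,2),(2,3),(1,3)}. w u \<in> X u}"
    using OP_iff[OF i, of _ 0] OP_iff[OF j, of _ 1] by (auto simp: X_def)
  then have "gct_pij p i j (Suc 0) = (\<Prod>u\<in>{(0,1),(1,2),(0,2),(2,3),(1,3)}. mu p (X u))"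
    unfolding gct_pij_def by (simp only:) (rule cyl[OF p], auto simp: gct_I_def)
  then show ?thesis by (simp add: X_def)
qed

definition Jt :: "int \<Rightarrow> (int \<times> int) set" where
  "Jt t = {(t,t+1),(t+1,t+2),(t,t+2)}"
definition Xt :: "nat \<Rightarrow> int \<Rightarrow> int \<times> int \<Rightarrow> bool set" where
  "Xt i t u = (if u = (t,t+1) then opA i else if u = (t+1,t+2) then opB i else opC i)"

lemma ev: "i \<in> {1..6} \<Longrightarrow> (gct_OP w t = OP_pat i) = (\<forall>u\<in>Jt t. w u \<in> Xt i t u)"
  by (simp add: OP_iff Jt_def Xt_def)

lemma prodJ: "(\<Prod>u\<in>Jt t. mu p (Xt i t u)) = mu p (opA i) * mu p (opB i) * mu p (opC i)"
  by (simp add: Jt_def Xt_def)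

lemma Jt_I: "Jt t \<subseteq> gct_I"
  by (auto simp: Jt_def gct_I_def)

lemma Jt_fin: "finite (Jt t)"
  by (simp add: Jt_def)

lemma Jt_disj: "2 \<le> M \<Longrightarrow> Jt 0 \<inter> Jt M = {}"
  by (auto simp: Jt_def)

lemma cyl2:
  assumes p: "0 \<le> p" "p \<le> 1" and J: "finite J1" "J1 \<subseteq> gct_I" "finite J2" "J2 \<subseteq> gct_I" "J1 \<inter> J2 = {}"
  shows "measure (gct_M p) {w\<in>space (gct_M p). (\<forall>j\<in>J1. w j \<in> X j) \<and> (\<forall>j\<in>J2. w j \<in> Y j)}
     = (\<Prod>j\<in>J1. mu p (X j)) * (\<Prod>j\<in>J2. mu p (Y j))"
proof -
  define Z where "Z = (\<lambda>j. if j \<in> J1 then X j else Y j)"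
  have "{w\<in>space (gct_M p). (\<forall>j\<in>J1. w j \<in> X j) \<and> (\<forall>j\<in>J2. w j \<in> Y j)}
      = {w\<in>space (gct_M p). \<forall>j\<in>J1 \<union> J2. w j \<in> Z j}"
    using J(5) by (auto simp: Z_def)
  also have "measure (gct_M p) \<dots> = (\<Prod>j\<in>J1 \<union> J2. mu p (Z j))"
    using J by (intro cyl p) auto
  also have "\<dots> = (\<Prod>j\<in>J1. mu p (Z j)) * (\<Prod>j\<in>J2. mu p (Z j))"
    using J by (simp add: prod.union_disjoint)
  also have "(\<Prod>j\<in>J1. mu p (Z j)) = (\<Prod>j\<in>J1. mu p (X j))"
    by (rule prod.cong) (simp_all add: Z_def)
  also have "(\<Prod>j\<in>J2. mu p (Z j)) = (\<Prod>j\<in>J2. mu p (Y j))"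
    using J(5) by (intro prod.cong) (auto simp: Z_def)
  finally show ?thesis .
qed

lemma pijm:
  assumes p: "0 \<le> p" "p \<le> 1" and i: "i \<in> {1..6}" and j: "j \<in> {1..6}" and m: "2 \<le> m"
  shows "gct_pij p i j m = gct_p p i * gct_p p j"
proof -
  have M: "2 \<le> int m" using m by simp
  have "{w\<in>space (gct_M p). gct_OP w 0 = OP_pat i \<and> gct_OP w (int m) = OP_pat j} =
      {w\<in>space (gct_M p). (\<forall>u\<in>Jt 0. w u \<in> Xt i 0 u) \<and> (\<forall>u\<in>Jt (int m). w u \<in> Xt j (int m) u)}"
    by (simp add: ev[OF i] ev[OF j])
  then have "gct_pij p i j m = (\<Prod>u\<in>Jt 0. mu p (Xt i 0 u)) * (\<Prod>u\<in>Jt (int m). mu p (Xt j (int m) u))"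
    unfolding gct_pij_def by (simp only:) (rule cyl2[OF p Jt_fin Jt_I Jt_fin Jt_I Jt_disj[OF M]])
  then show ?thesis by (simp add: prodJ p_formula[OF p i] p_formula[OF p j])
qed

lemma tA:
  assumes p: "0 \<le> p" "p \<le> 1" and i: "i \<in> {1..6}"
  shows "gct_p p i = claimed_pvec p i"
  unfolding p_formula[OF p i] using six[OF i]
  by (elim disjE; simp add: mu_def opA_def opB_def opC_def claimed_pvec_def power2_eq_square Let_def)

lemma tB:
  assumes p: "0 \<le> p" "p \<le> 1" and i: "i \<in> {1..6}" and j: "j \<in> {1..6}"
  shows "gct_pij p i j (Suc (Suc k)) + gct_pij p j i (Suc (Suc k)) - 2 * gct_p p i * gct_p p j = 0"
proof -
  have "gct_pij p i j (Suc (Suc k)) = gct_p p i * gct_p p j" by (rule pijm[OF p i j]) simp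
  moreover have "gct_pij p j i (Suc (Suc k)) = gct_p p j * gct_p p i" by (rule pijm[OF p j i]) simp
  ultimately show ?thesis by simp
qed

lemma tC:
  assumes p: "0 \<le> p" "p \<le> 1" and i: "i \<in> {1..6}" and j: "j \<in> {1..6}"
  shows "gct_pij p i j (Suc 0) + gct_pij p j i (Suc 0) - 2 * gct_p p i * gct_p p j
    = claimed_Sigma p i j - gct_p p i * ((if i = j then 1 else 0) - gct_p p j)"
  unfolding pij1[OF p i j] pij1[OF p j i] p_formula[OF p i] p_formula[OF p j]
  by (rule sig[OF i j])

theorem proposition3p2:
  fixes p :: real
  assumes "0 < p" and "p < 1"
  shows "(\<forall>i\<in>{1..6}. gct_p p i = claimed_pvec p i) \<and>
         (\<forall>i\<in>{1..6}. \<forall>j\<in>{1..6}.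
            (\<lambda>k. gct_pij p i j (Suc k) + gct_pij p j i (Suc k) - 2 * gct_p p i * gct_p p j)
              sums (claimed_Sigma p i j - gct_p p i * ((if i = j then 1 else 0) - gct_p p j)))"
proof -
  have p: "0 \<le> p" "p \<le> 1" using assms by auto
  have S: "(\<lambda>k. gct_pij p i j (Suc k) + gct_pij p j i (Suc k) - 2 * gct_p p i * gct_p p j)
              sums (claimed_Sigma p i j - gct_p p i * ((if i = j then 1 else 0) - gct_p p j))"
    if i: "i \<in> {1..6}" and j: "j \<in> {1..6}" for i j
  proof -
    define f where "f = (\<lambda>k. gct_pij p i j (Suc k) + gct_pij p j i (Suc k) - 2 * gct_p p i * gct_p p j)"
    have fe: "f = (\<lambda>k. if k = 0 then f 0 else 0)"
    proof
      fix k show "f k = (if k = 0 then f 0 else 0)"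
      proof (cases k)
        case (Suc k')
        then show ?thesis unfolding f_def using tB[OF p i j, of k'] by simp
      qed simp
    qed
    have "(\<lambda>k. if k = 0 then f k else 0) sums f 0" by (rule sums_single)
    then have "f sums f 0" by (subst fe) (simp cong: if_cong)
    then show ?thesis unfolding f_def tC[OF p i j] .
  qed
  show ?thesis using tA[OF p] S by blast
qed

end
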